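(* Let $G$ be a finite group and $N\trianglelefteq G$ a normal subgroup. If $N$ and $G/N$ are mixable, then $G$ is mixable, and $\mathrm{mixlen}(G)\le\mathrm{mixlen}(N)+\mathrm{mixlen}(G/N)$.
   Context: For a finite group $G$, a random subproduct is a random element $g_1^{\epsilon_1}\cdots g_k^{\epsilon_k}$ with $g_1,\dots,g_k\in G$ fixed and $\epsilon_1,\dots,\epsilon_k$ independent Bernoulli random variables, $\epsilon_i\sim\mathrm{Ber}(p_i)$, $p_i\in[0,1]$; $k$ is its length. $G$ is mixable if some random subproduct is exactly uniform on $G$, and $\mathrm{mixlen}(G)$ is the minimal length of such. *)

theory Defs
  imports "HOL-Algebra.Algebra"
begin

text \<open>A random subproduct of length k is given by a list
  gs = [g_1,...,g_k] of group elements and a list ps = [p_1,...,p_k] of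
  probabilities.\<close>

fun subprod :: "('a, 'b) monoid_scheme \<Rightarrow> 'a list \<Rightarrow> bool list \<Rightarrow> 'a" where
  "subprod G (g # gs) (e # es) = (if e then g else \<one>\<^bsub>G\<^esub>) \<otimes>\<^bsub>G\<^esub> subprod G gs es"
| "subprod G _ _ = \<one>\<^bsub>G\<^esub>"

text \<open>Probability of the bit vector es when e_i ~ Ber(p_i) independently.\<close>
fun bits_weight :: "real list \<Rightarrow> bool list \<Rightarrow> real" where
  "bits_weight (p # ps) (e # es) = (if e then p else 1 - p) * bits_weight ps es"
| "bits_weight _ _ = 1"

definition subprod_prob :: "('a, 'b) monoid_scheme \<Rightarrow> 'a list \<Rightarrow> real list \<Rightarrow> 'a \<Rightarrow> real" where
  "subprod_prob G gs ps x =
     (\<Sum>es \<in> {es. length es = length gs \<and> subprod G gs es = x}. bits_weight ps es)"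

definition uniform_subprod :: "('a, 'b) monoid_scheme \<Rightarrow> 'a list \<Rightarrow> real list \<Rightarrow> bool" where
  "uniform_subprod G gs ps \<longleftrightarrow>
     set gs \<subseteq> carrier G \<and> length ps = length gs \<and> (\<forall>p \<in> set ps. 0 \<le> p \<and> p \<le> 1) \<and>
     (\<forall>x \<in> carrier G. subprod_prob G gs ps x = 1 / real (card (carrier G)))"

definition mixable :: "('a, 'b) monoid_scheme \<Rightarrow> bool" where
  "mixable G \<longleftrightarrow> (\<exists>gs ps. uniform_subprod G gs ps)"

definition mixlen :: "('a, 'b) monoid_scheme \<Rightarrow> nat" where
  "mixlen G = (LEAST k. \<exists>gs ps. length gs = k \<and> uniform_subprod G gs ps)"

end

theory Submission
  imports Defs
begin

lemma subprod_carrier_upd: "subprod (G\<lparr>carrier := N\<rparr>) gs es = subprod G gs es"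
  by (induction G gs es rule: subprod.induct) auto

lemma (in monoid) subprod_closed: "set gs \<subseteq> carrier G \<Longrightarrow> subprod G gs es \<in> carrier G"
proof (induction gs arbitrary: es)
  case (Cons g gs) then show ?case by (cases es) auto
qed simp

lemma (in monoid) subprod_append:
  assumes "set cs \<subseteq> carrier G" "set ns \<subseteq> carrier G" "length a = length cs"
  shows "subprod G (cs @ ns) (a @ b) = subprod G cs a \<otimes> subprod G ns b"
  using assms
proof (induction cs arbitrary: a)
  case Nil then show ?case by (simp add: subprod_closed)
next
  case (Cons c cs)
  then obtain e a' where a: "a = e # a'" by (cases a) auto
  show ?case using Cons a by (simp add: m_assoc subprod_closed)
qed

lemma bits_weight_append:
  "length a = length qs \<Longrightarrow> bits_weight (qs @ ps) (a @ b) = bits_weight qs a * bits_weight ps b"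
proof (induction qs arbitrary: a)
  case Nil then show ?case by simp
next
  case (Cons q qs)
  then obtain e a' where a: "a = e # a'" by (cases a) auto
  show ?case using Cons a by simp
qed

lemma fin_bool_lists: "finite {xs::bool list. length xs = n}"
  using finite_lists_length_eq[of "UNIV::bool set" n] by simp

lemma split_sum:
  fixes f :: "bool list \<Rightarrow> real"
  shows "(\<Sum>es\<in>{es. length es = m + k \<and> P es}. f es) =
         (\<Sum>a\<in>{a. length a = m}. \<Sum>b\<in>{b. length b = k \<and> P (a @ b)}. f (a @ b))"
proof -
  let ?S = "Sigma {a::bool list. length a = m} (\<lambda>a. {b. length b = k \<and> P (a @ b)})"
  have "(\<Sum>a\<in>{a. length a = m}. \<Sum>b\<in>{b. length b = k \<and> P (a @ b)}. f (a @ b))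
        = (\<Sum>(a,b)\<in>?S. f (a @ b))"
    by (rule sum.Sigma) (auto intro: finite_subset[OF _ fin_bool_lists] fin_bool_lists)
  also have "\<dots> = (\<Sum>es\<in>(\<lambda>(a,b). a @ b) ` ?S. f es)"
    by (subst sum.reindex) (auto simp: inj_on_def case_prod_unfold)
  also have "(\<lambda>(a,b). a @ b) ` ?S = {es. length es = m + k \<and> P es}"
  proof (intro equalityI subsetI)
    fix es assume "es \<in> {es. length es = m + k \<and> P es}"
    then show "es \<in> (\<lambda>(a,b). a @ b) ` ?S"
      by (intro image_eqI[of _ _ "(take m es, drop m es)"]) auto
  qed auto
  finally show ?thesis by simp
qed

lemma (in group) core:
  assumes fin: "finite (carrier G)" and nrm: "N \<lhd> G"
    and uN: "uniform_subprod (G\<lparr>carrier := N\<rparr>) ns ps"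
    and uQ: "uniform_subprod (G Mod N) (map (\<lambda>c. N #> c) cs) qs"
    and cs: "set cs \<subseteq> carrier G"
  shows "uniform_subprod G (cs @ ns) (qs @ ps)"
proof -
  interpret normal N G by (rule nrm)
  have NG: "N \<subseteq> carrier G" by (rule subset)
  have ns: "set ns \<subseteq> N" and lps: "length ps = length ns"
    and ps01: "\<forall>p\<in>set ps. 0 \<le> p \<and> p \<le> 1"
    and probN': "\<And>y. y \<in> N \<Longrightarrow> subprod_prob G ns ps y = 1 / real (card N)"
    using uN by (auto simp: uniform_subprod_def subprod_prob_def subprod_carrier_upd)
  have lqs: "length qs = length cs" and qs01: "\<forall>p\<in>set qs. 0 \<le> p \<and> p \<le> 1"
    and probQ': "\<And>C. C \<in> rcosets N \<Longrightarrow>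
       subprod_prob (G Mod N) (map (\<lambda>c. N #> c) cs) qs C = 1 / real (card (rcosets N))"
    using uQ by (auto simp: uniform_subprod_def FactGroup_def)
  have grpN: "group (G\<lparr>carrier := N\<rparr>)" by (rule subgroup_imp_group[OF subgroup_axioms])
  have spN: "subprod G ns b \<in> N" for b
    using monoid.subprod_closed[OF group.is_monoid[OF grpN], of ns b] ns
    by (simp add: subprod_carrier_upd)
  have probN: "subprod_prob G ns ps y = (if y \<in> N then 1 / real (card N) else 0)" for y
  proof (cases "y \<in> N")
    case False
    then have "{es. length es = length ns \<and> subprod G ns es = y} = {}" using spN by auto
    then show ?thesis using False unfolding subprod_prob_def by (metis sum.empty)
  qed (simp add: probN')
  have spMod: "subprod (G Mod N) (map (\<lambda>c. N #> c) cs') a = N #> subprod G cs' a"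
    if "set cs' \<subseteq> carrier G" for cs' a
    using that
  proof (induction cs' arbitrary: a)
    case Nil then show ?case by (simp add: FactGroup_def NG)
  next
    case (Cons c cs')
    then show ?case
    proof (cases a)
      case (Cons e a')
      have x: "subprod G cs' a' \<in> carrier G" using Cons.prems subprod_closed by auto
      have "(if e then N #> c else N) = N #> (if e then c else \<one>)" using NG by simp
      then show ?thesis using Cons Cons.IH[of a'] Cons.prems x
        by (simp add: FactGroup_def rcos_sum rcosets_mult_eq rcosetsI[OF NG x])
    qed (simp add: FactGroup_def NG)
  qed
  have coset_iff: "(inv x \<otimes> g \<in> N) = (N #> x = N #> g)" if "x \<in> carrier G" "g \<in> carrier G" for x g
  proof
    assume h: "inv x \<otimes> g \<in> N"
    have "g \<in> x <# N" by (rule lcos_module_rev[OF is_group that(1,2) h])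
    then have "g \<in> N #> x" using coset_eq that by auto
    then show "N #> x = N #> g" by (rule repr_independence[OF _ that(1) subgroup_axioms])
  next
    assume "N #> x = N #> g"
    then have "g \<in> x <# N" using rcos_self[OF that(2) subgroup_axioms] coset_eq that by auto
    then obtain h where h: "h \<in> N" "g = x \<otimes> h" unfolding l_coset_def by auto
    then have "inv x \<otimes> g = h" using that NG inv_solve_left' by blast
    then show "inv x \<otimes> g \<in> N" using h by simp
  qed
  have fcard: "card (rcosets N) * card N = card (carrier G)"
    using lagrange[OF subgroup_axioms] by (simp add: order_def)
  let ?m = "length cs" and ?k = "length ns"
  have main: "subprod_prob G (cs @ ns) (qs @ ps) g = 1 / real (card (carrier G))"
    if g: "g \<in> carrier G" for g
  proof -
    have "subprod_prob G (cs @ ns) (qs @ ps) g =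
      (\<Sum>es\<in>{es. length es = ?m + ?k \<and> subprod G (cs @ ns) es = g}. bits_weight (qs @ ps) es)"
      by (simp add: subprod_prob_def)
    also have "\<dots> = (\<Sum>a\<in>{a. length a = ?m}. \<Sum>b\<in>{b. length b = ?k \<and> subprod G (cs @ ns) (a @ b) = g}.
                bits_weight (qs @ ps) (a @ b))"
      by (rule split_sum)
    also have "\<dots> = (\<Sum>a\<in>{a. length a = ?m}. bits_weight qs a *
        subprod_prob G ns ps (inv (subprod G cs a) \<otimes> g))"
    proof (rule sum.cong[OF refl])
      fix a :: "bool list" assume a: "a \<in> {a. length a = ?m}"
      have x: "subprod G cs a \<in> carrier G" using cs subprod_closed by auto
      have "{b. length b = ?k \<and> subprod G (cs @ ns) (a @ b) = g} =
            {b. length b = ?k \<and> subprod G ns b = inv (subprod G cs a) \<otimes> g}"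
      proof (intro Collect_cong conj_cong refl)
        fix b
        have y: "subprod G ns b \<in> carrier G" using spN NG by auto
        have "subprod G (cs @ ns) (a @ b) = subprod G cs a \<otimes> subprod G ns b"
          using subprod_append[OF cs _] ns NG a by auto
        then show "(subprod G (cs @ ns) (a @ b) = g) = (subprod G ns b = inv (subprod G cs a) \<otimes> g)"
          using inv_solve_left[OF y x g] by auto
      qed
      then show "(\<Sum>b\<in>{b. length b = ?k \<and> subprod G (cs @ ns) (a @ b) = g}. bits_weight (qs @ ps) (a @ b))
         = bits_weight qs a * subprod_prob G ns ps (inv (subprod G cs a) \<otimes> g)"
        using a lqs by (simp add: subprod_prob_def bits_weight_append sum_distrib_left)
    qed
    also have "\<dots> = (\<Sum>a\<in>{a. length a = ?m}. if N #> subprod G cs a = N #> g then bits_weight qs a / real (card N) else 0)"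
      using coset_iff[OF subprod_closed[OF cs] g] by (intro sum.cong[OF refl]) (simp add: probN)
    also have "\<dots> = (\<Sum>a\<in>{a. length a = ?m \<and> N #> subprod G cs a = N #> g}. bits_weight qs a) / real (card N)"
    proof -
      have "{a. length a = ?m \<and> N #> subprod G cs a = N #> g} = {a \<in> {a::bool list. length a = ?m}. N #> subprod G cs a = N #> g}"
        by auto
      then show ?thesis
        using sum.inter_filter[OF fin_bool_lists[of "?m"], where P="\<lambda>a. N #> subprod G cs a = N #> g"
             and g="\<lambda>a. bits_weight qs a / real (card N)"]
        by (simp add: sum_divide_distrib)
    qed
    also have "\<dots> = subprod_prob (G Mod N) (map (\<lambda>c. N #> c) cs) qs (N #> g) / real (card N)"
      using spMod[OF cs] by (simp add: subprod_prob_def eq_commute)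
    also have "\<dots> = 1 / real (card (carrier G))"
    proof -
      have "card N > 0" using finite_subset[OF NG fin] one_closed card_gt_0_iff by blast
      then show ?thesis using probQ'[OF rcosetsI[OF NG g]] fcard
        by (metis divide_divide_eq_left of_nat_mult)
    qed
    finally show ?thesis .
  qed
  show ?thesis
    unfolding uniform_subprod_def using cs ns NG lps lqs ps01 qs01 main by auto
qed

theorem mainTheorem11:
  fixes G :: "('a, 'b) monoid_scheme" and N :: "'a set"
  assumes "group G" and "finite (carrier G)" and "N \<lhd> G"
    and "mixable (G\<lparr>carrier := N\<rparr>)" and "mixable (G Mod N)"
  shows "mixable G \<and> mixlen G \<le> mixlen (G\<lparr>carrier := N\<rparr>) + mixlen (G Mod N)"
proof -
  interpret group G by (rule assms(1))
  interpret normal N G by (rule assms(3))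
  have "\<exists>k gs ps. length gs = k \<and> uniform_subprod (G\<lparr>carrier := N\<rparr>) gs ps"
    using assms(4) unfolding mixable_def by blast
  then have "\<exists>gs ps. length gs = mixlen (G\<lparr>carrier := N\<rparr>) \<and> uniform_subprod (G\<lparr>carrier := N\<rparr>) gs ps"
    unfolding mixlen_def by (rule LeastI_ex)
  then obtain ns ps where ns: "length ns = mixlen (G\<lparr>carrier := N\<rparr>)"
    and uN: "uniform_subprod (G\<lparr>carrier := N\<rparr>) ns ps" by blast
  have "\<exists>k gs ps. length gs = k \<and> uniform_subprod (G Mod N) gs ps"
    using assms(5) unfolding mixable_def by blast
  then have "\<exists>gs ps. length gs = mixlen (G Mod N) \<and> uniform_subprod (G Mod N) gs ps"
    unfolding mixlen_def by (rule LeastI_ex)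
  then obtain Cs qs where Cs: "length Cs = mixlen (G Mod N)"
    and uQ: "uniform_subprod (G Mod N) Cs qs" by blast
  define cs where "cs = map (\<lambda>C. SOME c. c \<in> carrier G \<and> C = N #>\<^bsub>G\<^esub> c) Cs"
  have rep: "(SOME c. c \<in> carrier G \<and> C = N #>\<^bsub>G\<^esub> c) \<in> carrier G \<and> C = N #>\<^bsub>G\<^esub> (SOME c. c \<in> carrier G \<and> C = N #>\<^bsub>G\<^esub> c)"
    if "C \<in> set Cs" for C
  proof (rule someI_ex)
    have "C \<in> rcosets\<^bsub>G\<^esub> N" using uQ that by (auto simp: uniform_subprod_def FactGroup_def)
    then show "\<exists>c. c \<in> carrier G \<and> C = N #>\<^bsub>G\<^esub> c" unfolding RCOSETS_def by blast
  qed
  have csG: "set cs \<subseteq> carrier G" using rep unfolding cs_def by auto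
  have "map (\<lambda>c. N #>\<^bsub>G\<^esub> c) cs = Cs" unfolding cs_def map_map
    by (rule map_idI) (use rep in simp)
  then have uQ': "uniform_subprod (G Mod N) (map (\<lambda>c. N #>\<^bsub>G\<^esub> c) cs) qs" using uQ by simp
  have u: "uniform_subprod G (cs @ ns) (qs @ ps)"
    by (rule core[OF assms(2,3) uN uQ' csG])
  have len: "length (cs @ ns) = mixlen (G\<lparr>carrier := N\<rparr>) + mixlen (G Mod N)"
    using ns Cs by (simp add: cs_def)
  have "mixlen G \<le> mixlen (G\<lparr>carrier := N\<rparr>) + mixlen (G Mod N)"
  proof -
    have "\<exists>gs ps. length gs = mixlen (G\<lparr>carrier := N\<rparr>) + mixlen (G Mod N) \<and> uniform_subprod G gs ps"
      using u len by blast
    then show ?thesis unfolding mixlen_def[of G] by (rule Least_le)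
  qed
  moreover have "mixable G" unfolding mixable_def using u by blast
  ultimately show ?thesis by blast
qed

end
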